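(* Let $(X,d,\kappa)$ be a complete digital metric space where $d$ is an $\ell_p$ metric for some $1\le p\le\infty$, and let $T:X\to X$ be a weakly uniformly strict digital contraction. Then $T$ has a unique fixed point $z$. Moreover, for every $x\in X$, $\lim_{n\to\infty}T^n(x)=z$.
   Context: A digital metric space is a triple $(X,d,\kappa)$ where $X\subset\mathbb{Z}^n$ for some positive integer $n$, $\kappa$ is an adjacency relation on $X$, and $d$ is a metric on $X$. The $\ell_p$ metric on $\mathbb{Z}^n$ is $d(x,y)=(\sum_i|x_i-y_i|^p)^{1/p}$ for $1\le p<\infty$ and $\max_i|x_i-y_i|$ for $p=\infty$. $T:X\to X$ is a weakly uniformly strict digital contraction if for every $\varepsilon>0$ there exists $\delta>0$ such that for all $x,y\in X$, $\varepsilon\le d(x,y)<\varepsilon+\delta$ implies $d(T(x),T(y))<\varepsilon$. $T^n$ denotes the $n$-fold composition of $T$. *)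

theory Defs
  imports "HOL-Analysis.Analysis"
begin

text \<open>Points of \<int>^n are modelled as vectors int ^ 'n over a finite index type 'n
  (dimension n = CARD('n) \<ge> 1). The exponent p ranges over [1, \<infinity>], modelled as an ereal.\<close>

definition lp_dist :: "ereal \<Rightarrow> int ^ 'n \<Rightarrow> int ^ 'n \<Rightarrow> real" where
  "lp_dist p x y =
     (if p = \<infinity> then Max (range (\<lambda>i. real_of_int \<bar>x $ i - y $ i\<bar>))
      else (\<Sum>i\<in>UNIV. real_of_int \<bar>x $ i - y $ i\<bar> powr real_of_ereal p) powr (1 / real_of_ereal p))"

definition dm_converges :: "('a \<Rightarrow> 'a \<Rightarrow> real) \<Rightarrow> (nat \<Rightarrow> 'a) \<Rightarrow> 'a \<Rightarrow> bool" where
  "dm_converges d s z \<longleftrightarrow> (\<forall>e>0. \<exists>N. \<forall>m\<ge>N. d (s m) z < e)"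

definition dm_cauchy :: "('a \<Rightarrow> 'a \<Rightarrow> real) \<Rightarrow> (nat \<Rightarrow> 'a) \<Rightarrow> bool" where
  "dm_cauchy d s \<longleftrightarrow> (\<forall>e>0. \<exists>N. \<forall>m\<ge>N. \<forall>k\<ge>N. d (s m) (s k) < e)"

definition dm_complete :: "'a set \<Rightarrow> ('a \<Rightarrow> 'a \<Rightarrow> real) \<Rightarrow> bool" where
  "dm_complete X d \<longleftrightarrow>
     (\<forall>s. (\<forall>m. s m \<in> X) \<longrightarrow> dm_cauchy d s \<longrightarrow> (\<exists>z\<in>X. dm_converges d s z))"

definition weakly_uniformly_strict_contraction ::
    "'a set \<Rightarrow> ('a \<Rightarrow> 'a \<Rightarrow> real) \<Rightarrow> ('a \<Rightarrow> 'a) \<Rightarrow> bool" where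
  "weakly_uniformly_strict_contraction X d T \<longleftrightarrow>
     (\<forall>e>0. \<exists>\<delta>>0. \<forall>x\<in>X. \<forall>y\<in>X. e \<le> d x y \<and> d x y < e + \<delta> \<longrightarrow> d (T x) (T y) < e)"

end

theory Submission
  imports Defs
begin

lemma lp_dist_self: "lp_dist p x x = 0"
  by (simp add: lp_dist_def)

lemma lp_dist_ge1:
  fixes x y :: "int ^ 'n"
  assumes "1 \<le> p" "x \<noteq> y"
  shows "1 \<le> lp_dist p x y"
proof -
  obtain i where i: "x $ i \<noteq> y $ i" using assms(2) by (auto simp: vec_eq_iff)
  define c where "c = real_of_int \<bar>x $ i - y $ i\<bar>"
  have c1: "1 \<le> c" using i unfolding c_def by linarith
  show ?thesis
  proof (cases "p = \<infinity>")
    case True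
    have "c \<le> Max (range (\<lambda>i. real_of_int \<bar>x $ i - y $ i\<bar>))"
      unfolding c_def by (rule Max_ge) auto
    then show ?thesis using True c1 by (simp add: lp_dist_def)
  next
    case False
    define q where "q = real_of_ereal p"
    have q1: "1 \<le> q" using assms(1) False unfolding q_def
      by (cases p) auto
    have "1 \<le> c powr q" using c1 q1 by (simp add: ge_one_powr_ge_zero)
    also have "c powr q \<le> (\<Sum>i\<in>UNIV. real_of_int \<bar>x $ i - y $ i\<bar> powr q)"
      unfolding c_def by (rule member_le_sum) auto
    finally have "1 \<le> (\<Sum>i\<in>UNIV. real_of_int \<bar>x $ i - y $ i\<bar> powr q) powr (1 / q)"
      using q1 by (simp add: ge_one_powr_ge_zero)
    then show ?thesis using False by (simp add: lp_dist_def q_def)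
  qed
qed

theorem theorem8p9:
  fixes X :: "(int ^ 'n) set" and p :: ereal and T :: "int ^ 'n \<Rightarrow> int ^ 'n"
    and \<kappa> :: "int ^ 'n \<Rightarrow> int ^ 'n \<Rightarrow> bool"
  assumes "X \<noteq> {}"
    and "1 \<le> p"
    and "dm_complete X (lp_dist p)"
    and "\<forall>x\<in>X. T x \<in> X"
    and "weakly_uniformly_strict_contraction X (lp_dist p) T"
  shows "\<exists>z\<in>X. T z = z \<and> (\<forall>w\<in>X. T w = w \<longrightarrow> w = z)
           \<and> (\<forall>x\<in>X. dm_converges (lp_dist p) (\<lambda>m. (T ^^ m) x) z)"
proof -
  let ?d = "lp_dist p"
  have W: "\<And>e. e > 0 \<Longrightarrow> \<exists>\<delta>>0. \<forall>x\<in>X. \<forall>y\<in>X. e \<le> ?d x y \<and> ?d x y < e + \<delta> \<longrightarrow> ?d (T x) (T y) < e"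
    using assms(5) unfolding weakly_uniformly_strict_contraction_def by blast
  have inX: "\<And>m x. x \<in> X \<Longrightarrow> (T ^^ m) x \<in> X"
  proof -
    fix m x assume "x \<in> X" then show "(T ^^ m) x \<in> X"
      by (induction m) (auto simp: assms(4))
  qed
  have uniq: "\<And>z w. z \<in> X \<Longrightarrow> w \<in> X \<Longrightarrow> T z = z \<Longrightarrow> T w = w \<Longrightarrow> z = w"
  proof (rule ccontr)
    fix z w assume h: "z \<in> X" "w \<in> X" "T z = z" "T w = w" "z \<noteq> w"
    have pos: "?d z w > 0" using lp_dist_ge1[OF assms(2) h(5)] by linarith
    obtain \<delta> where "\<delta> > 0" and "\<forall>x\<in>X. \<forall>y\<in>X. ?d z w \<le> ?d x y \<and> ?d x y < ?d z w + \<delta> \<longrightarrow> ?d (T x) (T y) < ?d z w"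
      using W[OF pos] by blast
    then have "?d (T z) (T w) < ?d z w" using h by force
    then show False using h by simp
  qed
  have ex: "\<exists>m. T ((T ^^ m) x) = (T ^^ m) x" if x: "x \<in> X" for x
  proof (rule ccontr)
    assume nf: "\<not> ?thesis"
    define a where "a m = ?d ((T ^^ m) x) ((T ^^ Suc m) x)" for m
    have a1: "1 \<le> a m" for m
      unfolding a_def using lp_dist_ge1[OF assms(2)] nf by (metis funpow.simps(2) o_apply)
    have bdd: "bdd_below (range a)" using a1 by (intro bdd_belowI[of _ 1]) auto
    define L where "L = Inf (range a)"
    have L1: "1 \<le> L" unfolding L_def using a1 by (auto intro: cInf_greatest)
    obtain \<delta> where dp: "\<delta> > 0" and dd: "\<forall>u\<in>X. \<forall>v\<in>X. L \<le> ?d u v \<and> ?d u v < L + \<delta> \<longrightarrow> ?d (T u) (T v) < L"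
      using W[of L] L1 by auto
    have "\<exists>y\<in>range a. y < L + \<delta>" unfolding L_def
      by (rule cInf_lessD) (use dp L_def in auto)
    then obtain m where m: "a m < L + \<delta>" by auto
    have "L \<le> a m" unfolding L_def using bdd by (auto intro: cInf_lower)
    then have "?d (T ((T ^^ m) x)) (T ((T ^^ Suc m) x)) < L"
      using dd inX[OF x, of m] inX[OF x, of "Suc m"] m unfolding a_def by blast
    then have "a (Suc m) < L" unfolding a_def by simp
    moreover have "L \<le> a (Suc m)" unfolding L_def using bdd by (auto intro: cInf_lower)
    ultimately show False by simp
  qed
  obtain x0 where x0: "x0 \<in> X" using assms(1) by blast
  obtain m0 where m0: "T ((T ^^ m0) x0) = (T ^^ m0) x0" using ex[OF x0] by blast
  define z where "z = (T ^^ m0) x0"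
  have zX: "z \<in> X" unfolding z_def using inX[OF x0] .
  have Tz: "T z = z" unfolding z_def using m0 .
  have conv: "dm_converges ?d (\<lambda>m. (T ^^ m) x) z" if x: "x \<in> X" for x
  proof -
    obtain N where N: "T ((T ^^ N) x) = (T ^^ N) x" using ex[OF x] by blast
    have "(T ^^ N) x = z" using uniq[OF inX[OF x] zX N Tz] .
    have eq: "(T ^^ (N + k)) x = z" for k
    proof (induction k)
      case 0 then show ?case using \<open>(T ^^ N) x = z\<close> by simp
    next
      case (Suc k) then show ?case using Tz by simp
    qed
    show ?thesis unfolding dm_converges_def
    proof (intro allI impI exI[of _ N])
      fix e :: real and m assume "0 < e" "N \<le> m"
      then obtain k where "m = N + k" using le_Suc_ex by blast
      then show "?d ((T ^^ m) x) z < e" using eq \<open>0 < e\<close> by (simp add: lp_dist_self)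
    qed
  qed
  show ?thesis
    using zX Tz uniq conv by blast
qed

end
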